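(* Let $p\geq 5$ be an integer and $s=\frac1p$. Let $n\geq 1$ be an integer. Then there is no integer strictly between $2\left(n-\frac12\right)^s$ and $2\left(n-\frac12+\frac{1}{2^{p+1}}\right)^s$. *)

theory Defs
  imports Complex_Main
begin

end

theory Submission
  imports Defs
begin

theorem lemma3p1:
  fixes p n :: nat
  assumes "p \<ge> 5" and "n \<ge> 1"
  shows "\<not> (\<exists>m::int.
            2 * (real n - 1/2) powr (1 / real p) < real_of_int m \<and>
            real_of_int m < 2 * (real n - 1/2 + 1 / 2 ^ (p + 1)) powr (1 / real p))"
proof
  assume "\<exists>m::int.
            2 * (real n - 1/2) powr (1 / real p) < real_of_int m \<and>
            real_of_int m < 2 * (real n - 1/2 + 1 / 2 ^ (p + 1)) powr (1 / real p)"
  then obtain m :: int where m1: "2 * (real n - 1/2) powr (1 / real p) < real_of_int m"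
    and m2: "real_of_int m < 2 * (real n - 1/2 + 1 / 2 ^ (p + 1)) powr (1 / real p)" by blast
  define a where "a = real n - 1/2"
  define b where "b = real n - 1/2 + 1 / 2 ^ (p + 1)"
  define x where "x = real_of_int m / 2"
  have p0: "p > 0" using assms by simp
  have a0: "a > 0" using assms by (simp add: a_def)
  have b0: "b > 0" using a0 by (simp add: a_def b_def add_pos_pos)
  have x1: "a powr (1 / real p) < x" using m1 by (simp add: a_def x_def)
  have x2: "x < b powr (1 / real p)" using m2 by (simp add: b_def x_def)
  have ap: "(a powr (1 / real p)) ^ p = a"
    using a0 p0 by (simp add: powr_realpow[symmetric] powr_powr)
  have bp: "(b powr (1 / real p)) ^ p = b"
    using b0 p0 by (simp add: powr_realpow[symmetric] powr_powr)
  have "a < x ^ p"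
    using power_strict_mono[OF x1 _ p0] ap by simp
  moreover have "x ^ p < b"
  proof -
    have "x > 0" using x1 a0 by (smt (verit) powr_gt_zero)
    then show ?thesis using power_strict_mono[OF x2 _ p0] bp by simp
  qed
  ultimately have c1: "a * 2 ^ p < real_of_int m ^ p" and c2: "real_of_int m ^ p < b * 2 ^ p"
    by (simp_all add: x_def power_divide field_simps)
  obtain q where q: "p = Suc q" using p0 by (cases p) auto
  define K :: int where "K = 2 ^ q * (2 * int n - 1)"
  have aK: "a * 2 ^ p = real_of_int K"
    using assms by (simp add: a_def K_def q field_simps of_nat_diff)
  have bK: "b * 2 ^ p = real_of_int K + 1/2"
    using assms by (simp add: b_def K_def q field_simps of_nat_diff)
  have "K < m ^ p" using c1 aK by (metis of_int_less_iff of_int_power)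
  moreover have "m ^ p < K + 1"
  proof -
    have "real_of_int (m ^ p) < real_of_int K + 1" using c2 bK by simp
    then show ?thesis by linarith
  qed
  ultimately show False by linarith
qed

end
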